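(* For every $n \geq 6$, $c(\Gamma_n) \leq \left\lceil \frac{n}{3} \right\rceil$.
   Context: The Fibonacci cube $\Gamma_n$ is the subgraph of the hypercube $Q_n$ (vertex set $\{0,1\}^n$, adjacency = differing in exactly one position) induced by all binary strings of length $n$ containing no two consecutive 1's. Cops and Robbers: $k$ cops choose starting vertices, then the robber does; in each round all cops move (to a neighbor or stay), then the robber moves (to a neighbor or stays); cops win if some cop occupies the robber's vertex. The cop number $c(G)$ is the minimum $k$ for which the cops can guarantee capture. *)

theory Defs
  imports Complex_Main
begin

definition move_ok :: "'a set \<Rightarrow> ('a \<Rightarrow> 'a \<Rightarrow> bool) \<Rightarrow> 'a \<Rightarrow> 'a \<Rightarrow> bool" where
  "move_ok V adj v v' \<longleftrightarrow> v' = v \<or> (v' \<in> V \<and> adj v v')"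

definition cops_move_ok :: "'a set \<Rightarrow> ('a \<Rightarrow> 'a \<Rightarrow> bool) \<Rightarrow> 'a list \<Rightarrow> 'a list \<Rightarrow> bool" where
  "cops_move_ok V adj C C' \<longleftrightarrow> length C' = length C \<and> (\<forall>i<length C. move_ok V adj (C!i) (C'!i))"

(* cop_wins V adj C r : cops at positions C, robber at r, cops to move;
   the cops can force capture in finitely many rounds. *)
inductive cop_wins :: "'a set \<Rightarrow> ('a \<Rightarrow> 'a \<Rightarrow> bool) \<Rightarrow> 'a list \<Rightarrow> 'a \<Rightarrow> bool"
  for V adj where
  caught: "r \<in> set C \<Longrightarrow> cop_wins V adj C r"
| step: "\<lbrakk> cops_move_ok V adj C C';
           r \<in> set C' \<or> (\<forall>r'. move_ok V adj r r' \<longrightarrow> cop_wins V adj C' r') \<rbrakk>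
        \<Longrightarrow> cop_wins V adj C r"

definition k_cop_win :: "'a set \<Rightarrow> ('a \<Rightarrow> 'a \<Rightarrow> bool) \<Rightarrow> nat \<Rightarrow> bool" where
  "k_cop_win V adj k \<longleftrightarrow>
     (\<exists>C. length C = k \<and> set C \<subseteq> V \<and> (\<forall>r\<in>V. cop_wins V adj C r))"

definition cop_number :: "'a set \<Rightarrow> ('a \<Rightarrow> 'a \<Rightarrow> bool) \<Rightarrow> nat" where
  "cop_number V adj = (LEAST k. k_cop_win V adj k)"

(* Fibonacci cube Gamma_n: binary strings (bool lists) of length n with no two consecutive 1s;
   adjacency = differing in exactly one position (induced subgraph of Q_n). *)
definition fib_cube_vertices :: "nat \<Rightarrow> bool list set" where
  "fib_cube_vertices n =
     {xs. length xs = n \<and> (\<forall>i. Suc i < n \<longrightarrow> \<not> (xs!i \<and> xs!Suc i))}"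

definition hypercube_adj :: "bool list \<Rightarrow> bool list \<Rightarrow> bool" where
  "hypercube_adj xs ys \<longleftrightarrow>
     length xs = length ys \<and> card {i. i < length xs \<and> xs!i \<noteq> ys!i} = 1"

end

theory Submission
  imports Defs "HOL-Combinatorics.Permutations"
begin

abbreviation FC where "FC \<equiv> fib_cube_vertices"
abbreviation ADJ where "ADJ \<equiv> hypercube_adj"

definition nc :: "bool list \<Rightarrow> bool" where
  "nc xs \<longleftrightarrow> (\<forall>i. Suc i < length xs \<longrightarrow> \<not> (xs!i \<and> xs!Suc i))"

lemma FC_iff: "xs \<in> FC n \<longleftrightarrow> length xs = n \<and> nc xs"
  by (auto simp: fib_cube_vertices_def nc_def)

lemma nc_Nil[simp]: "nc []" by (simp add: nc_def)

lemma nc_Cons: "nc (x # xs) \<longleftrightarrow> (xs = [] \<or> \<not>(x \<and> hd xs)) \<and> nc xs"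
proof (cases xs)
  case Nil then show ?thesis by (simp add: nc_def)
next
  case (Cons y ys)
  have "nc (x # y # ys) \<longleftrightarrow> \<not>(x \<and> y) \<and> nc (y # ys)"
    unfolding nc_def
    apply safe
    subgoal by (drule spec[of _ 0]) simp
    subgoal for i by (drule spec[of _ "Suc i"]) simp
    subgoal for i by (cases i) auto
    subgoal for i by (cases i) auto
    done
  then show ?thesis using Cons by simp
qed

lemma nc_append: "nc (a @ b) \<longleftrightarrow> nc a \<and> nc b \<and> \<not>(a \<noteq> [] \<and> b \<noteq> [] \<and> last a \<and> hd b)"
  by (induction a) (auto simp: nc_Cons)

fun hdist :: "bool list \<Rightarrow> bool list \<Rightarrow> nat" where
  "hdist (x#xs) (y#ys) = (if x = y then 0 else 1) + hdist xs ys"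
| "hdist _ _ = 0"

lemma card_hdist: "length xs = length ys \<Longrightarrow> card {i. i < length xs \<and> xs!i \<noteq> ys!i} = hdist xs ys"
proof (induction xs arbitrary: ys)
  case Nil then show ?case by simp
next
  case (Cons x xs)
  then obtain y ys' where ys: "ys = y # ys'" and l: "length xs = length ys'" by (cases ys) auto
  have e: "{i. i < length (x#xs) \<and> (x#xs)!i \<noteq> ys!i} = (if x \<noteq> y then {0} else {}) \<union> Suc ` {i. i < length xs \<and> xs!i \<noteq> ys'!i}"
    unfolding ys
  proof (rule set_eqI)
    fix i show "i \<in> {i. i < length (x#xs) \<and> (x#xs)!i \<noteq> (y#ys')!i} \<longleftrightarrow> i \<in> (if x \<noteq> y then {0} else {}) \<union> Suc ` {i. i < length xs \<and> xs!i \<noteq> ys'!i}"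
      by (cases i) auto
  qed
  have "card ((if x \<noteq> y then {0} else {}) \<union> Suc ` {i. i < length xs \<and> xs!i \<noteq> ys'!i})
     = card (if x \<noteq> y then {0::nat} else {}) + card (Suc ` {i. i < length xs \<and> xs!i \<noteq> ys'!i})"
    by (rule card_Un_disjoint) auto
  also have "card (Suc ` {i. i < length xs \<and> xs!i \<noteq> ys'!i}) = hdist xs ys'"
    using Cons.IH[OF l] by (simp add: card_image)
  finally show ?case using e ys by simp
qed

lemma adj_iff: "ADJ xs ys \<longleftrightarrow> length xs = length ys \<and> hdist xs ys = 1"
  unfolding hypercube_adj_def using card_hdist by metis

lemma hdist_append: "length a = length a' \<Longrightarrow> hdist (a @ b) (a' @ b') = hdist a a' + hdist b b'"
proof (induction a arbitrary: a')
  case Nil then show ?case by simp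
next
  case (Cons x a) then show ?case by (cases a') auto
qed

lemma hdist_0: "length a = length b \<Longrightarrow> hdist a b = 0 \<longleftrightarrow> a = b"
proof (induction a arbitrary: b)
  case Nil then show ?case by simp
next
  case (Cons x a) then show ?case by (cases b) auto
qed

lemma hdist_sym: "hdist a b = hdist b a"
proof (induction a arbitrary: b)
  case Nil then show ?case by (cases b) auto
next
  case (Cons x a) then show ?case by (cases b) auto
qed

lemma hdist_refl[simp]: "hdist a a = 0"
  by (induction a) auto

lemma adj_append: "length a = length a' \<Longrightarrow> length b = length b' \<Longrightarrow>
   ADJ (a @ b) (a' @ b') \<longleftrightarrow> (a = a' \<and> ADJ b b') \<or> (b = b' \<and> ADJ a a')"
  unfolding adj_iff using hdist_append[of a a' b b'] hdist_0[of a a'] hdist_0[of b b']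
  by auto

lemma hdist_upd_self: "i < length x \<Longrightarrow> x!i \<noteq> c \<Longrightarrow> hdist x (x[i:=c]) = 1"
proof (induction x arbitrary: i)
  case Nil then show ?case by simp
next
  case (Cons a x) then show ?case by (cases i) auto
qed

lemma hdist_upd_fix: "i < length x \<Longrightarrow> length x = length y \<Longrightarrow> x!i \<noteq> y!i \<Longrightarrow> Suc (hdist (x[i:=y!i]) y) = hdist x y"
proof (induction x arbitrary: i y)
  case Nil then show ?case by simp
next
  case (Cons a x) then show ?case by (cases i; cases y) auto
qed

lemma hdist_upd_le: "length x = length y \<Longrightarrow> (i < length x \<Longrightarrow> x!i = c) \<Longrightarrow> hdist x (y[i:=c]) \<le> hdist x y"
proof (induction x arbitrary: i y)
  case Nil then show ?case by simp
next
  case (Cons a x) then show ?case by (cases i; cases y) auto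
qed

lemma hdist_upd_both: "length x = length y \<Longrightarrow> hdist (x[i:=c]) (y[i:=c]) \<le> hdist x y"
proof (induction x arbitrary: i y)
  case Nil then show ?case by simp
next
  case (Cons a x) then show ?case by (cases i; cases y) auto
qed

lemma nc_mono: "length a = length b \<Longrightarrow> (\<forall>k<length a. a!k \<longrightarrow> b!k) \<Longrightarrow> nc b \<Longrightarrow> nc a"
  unfolding nc_def by (metis Suc_lessD)

lemma ham_step:
  assumes x: "x \<in> FC n" and y: "y \<in> FC n" and ne: "x \<noteq> y"
  shows "\<exists>x'. x' \<in> FC n \<and> ADJ x x' \<and> hdist x' y < hdist x y"
proof -
  have lx: "length x = n" "length y = n" "nc x" "nc y" using x y by (auto simp: FC_iff)
  have "\<exists>i<n. x!i \<noteq> y!i"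
  proof (rule ccontr)
    assume "\<not> ?thesis" then have "x = y" using lx by (intro nth_equalityI) auto
    then show False using ne by simp
  qed
  then obtain i where i: "i < n" "x!i \<noteq> y!i" by blast
  show ?thesis
  proof (cases "\<exists>k<n. x!k \<and> \<not> y!k")
    case True
    then obtain k where k: "k < n" "x!k" "\<not> y!k" by blast
    let ?x = "x[k:=y!k]"
    have "nc ?x" by (rule nc_mono[of _ x]) (use lx k in \<open>auto simp: nth_list_update\<close>)
    moreover have "ADJ x ?x" using hdist_upd_self[of k x "y!k"] k lx by (simp add: adj_iff)
    moreover have "hdist ?x y < hdist x y" using hdist_upd_fix[of k x y] k lx by simp
    ultimately show ?thesis using lx by (intro exI[of _ ?x]) (simp add: FC_iff)
  next
    case False
    let ?x = "x[i:=y!i]"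
    have "nc ?x"
    proof (rule nc_mono[of _ y])
      show "\<forall>k<length ?x. ?x!k \<longrightarrow> y!k"
      proof (intro allI impI)
        fix k assume "k < length ?x" "?x!k" then show "y!k" using lx False by (cases "k = i") auto
      qed
    qed (use lx in auto)
    moreover have "ADJ x ?x" using hdist_upd_self[of i x "y!i"] i lx by (simp add: adj_iff)
    moreover have "hdist ?x y < hdist x y" using hdist_upd_fix[of i x y] i lx by simp
    ultimately show ?thesis using lx by (intro exI[of _ ?x]) (simp add: FC_iff)
  qed
qed


lemma move_ok_in: "move_ok V adj c c' \<Longrightarrow> c \<in> V \<Longrightarrow> c' \<in> V"
  by (auto simp: move_ok_def)

lemma cops_move_set: "set C \<subseteq> V \<Longrightarrow> cops_move_ok V adj C C' \<Longrightarrow> set C' \<subseteq> V"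
  unfolding cops_move_ok_def move_ok_def
  by (metis in_set_conv_nth nth_mem subset_iff)

lemma capture_now:
  assumes "i < length C" "r \<in> V" "C!i = r \<or> adj (C!i) r"
  shows "cop_wins V adj C r"
proof (rule cop_wins.step[where C'="C[i:=r]"])
  show "cops_move_ok V adj C (C[i:=r])"
    using assms by (auto simp: cops_move_ok_def move_ok_def nth_list_update)
  show "r \<in> set (C[i:=r]) \<or> (\<forall>r'. move_ok V adj r r' \<longrightarrow> cop_wins V adj (C[i:=r]) r')"
    using assms by (simp add: set_update_memI)
qed

lemma cop_wins_perm:
  assumes "cop_wins V adj C r"
  shows "mset C2 = mset C \<Longrightarrow> cop_wins V adj C2 r"
  using assms
proof (induction arbitrary: C2 rule: cop_wins.induct)
  case (caught r C)
  then show ?case by (metis cop_wins.caught mset_eq_setD)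
next
  case (step C C' r)
  obtain p where p: "p permutes {..<length C}" "permute_list p C = C2"
    using mset_eq_permutation[OF step.prems] by blast
  have lC: "length C2 = length C" using p by auto
  have lC': "length C' = length C" using step(1) by (simp add: cops_move_ok_def)
  have pC': "p permutes {..<length C'}" using p lC' by simp
  let ?C2' = "permute_list p C'"
  have mv: "cops_move_ok V adj C2 ?C2'"
    unfolding cops_move_ok_def
  proof (intro conjI allI impI)
    show "length ?C2' = length C2" using lC lC' by simp
    fix i assume i: "i < length C2"
    then have pi: "p i < length C" using permutes_in_image[OF p(1)] lC by auto
    have "C2!i = C!(p i)" using p permute_list_nth[OF p(1)] i lC by metis
    moreover have "?C2'!i = C'!(p i)" using permute_list_nth[OF pC'] i lC lC' by simp
    ultimately show "move_ok V adj (C2!i) (?C2'!i)" using step(1) pi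
      by (simp add: cops_move_ok_def)
  qed
  have ms: "mset ?C2' = mset C'" using mset_permute_list[OF pC'] .
  show ?case
  proof (rule cop_wins.step[OF mv])
    show "r \<in> set ?C2' \<or> (\<forall>r'. move_ok V adj r r' \<longrightarrow> cop_wins V adj ?C2' r')"
      using step(2) ms by (metis mset_eq_setD)
  qed
qed

lemma retract_wins:
  assumes "cop_wins V adj C r"
    and WV: "W \<subseteq> V" and into: "\<forall>x\<in>V. \<rho> x \<in> W" and idW: "\<forall>x\<in>W. \<rho> x = x"
    and hom: "\<forall>x y. x \<in> V \<longrightarrow> y \<in> V \<longrightarrow> adj x y \<longrightarrow> \<rho> x = \<rho> y \<or> adj (\<rho> x) (\<rho> y)"
  shows "set C \<subseteq> V \<Longrightarrow> r \<in> W \<Longrightarrow> cop_wins W adj (map \<rho> C) r"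
  using assms(1)
proof (induction rule: cop_wins.induct)
  case (caught r C)
  then have "\<rho> r \<in> set (map \<rho> C)" by simp
  then show ?case using caught idW by (metis cop_wins.caught)
next
  case (step C C' r)
  have sC': "set C' \<subseteq> V" using cops_move_set step by blast
  have mv: "cops_move_ok W adj (map \<rho> C) (map \<rho> C')"
    unfolding cops_move_ok_def
  proof (intro conjI allI impI)
    show "length (map \<rho> C') = length (map \<rho> C)" using step(1) by (simp add: cops_move_ok_def)
    fix i assume i: "i < length (map \<rho> C)"
    then have m: "move_ok V adj (C!i) (C'!i)" using step(1) by (simp add: cops_move_ok_def)
    have ci: "C!i \<in> V" using i step.prems by auto
    have l: "length C' = length C" using step(1) by (simp add: cops_move_ok_def)
    show "move_ok W adj (map \<rho> C ! i) (map \<rho> C' ! i)"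
    proof (cases "C'!i = C!i")
      case True then show ?thesis using i l by (simp add: move_ok_def)
    next
      case False
      then have "C'!i \<in> V" "adj (C!i) (C'!i)" using m by (auto simp: move_ok_def)
      then have "\<rho> (C!i) = \<rho> (C'!i) \<or> adj (\<rho> (C!i)) (\<rho> (C'!i))" using hom ci by blast
      then show ?thesis using i l into \<open>C'!i \<in> V\<close> by (auto simp: move_ok_def)
    qed
  qed
  show ?case
  proof (rule cop_wins.step[OF mv])
    show "r \<in> set (map \<rho> C') \<or> (\<forall>r'. move_ok W adj r r' \<longrightarrow> cop_wins W adj (map \<rho> C') r')"
    proof (cases "r \<in> set C'")
      case True
      then have "\<rho> r \<in> set (map \<rho> C')" by simp
      then show ?thesis using idW step.prems by auto
    next
      case False
      then have H: "\<forall>r'. move_ok V adj r r' \<longrightarrow> cop_wins V adj C' r' \<and> (set C' \<subseteq> V \<longrightarrow> r' \<in> W \<longrightarrow> cop_wins W adj (map \<rho> C') r')"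
        using step(2) by blast
      show ?thesis
      proof (intro disjI2 allI impI)
        fix r' assume "move_ok W adj r r'"
        then have "move_ok V adj r r'" "r' \<in> W" using WV step.prems by (auto simp: move_ok_def)
        then show "cop_wins W adj (map \<rho> C') r'" using H sC' by blast
      qed
    qed
  qed
qed

lemma dominate_wins:
  assumes "r \<in> V" "\<exists>i<length C. C!i = r \<or> adj (C!i) r"
  shows "cop_wins V adj C r"
  using assms capture_now by metis


abbreviation z4 :: "bool list" where "z4 \<equiv> [False, False, False, False]"

lemma FC_split:
  assumes "r \<in> FC (m + k)"
  shows "take m r \<in> FC m" "drop m r \<in> FC k" "r = take m r @ drop m r"
proof -
  have "nc r" using assms by (simp add: FC_iff)
  then have "nc (take m r) \<and> nc (drop m r)" using nc_append[of "take m r" "drop m r"] by simp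
  then show "take m r \<in> FC m" "drop m r \<in> FC k" using assms by (auto simp: FC_iff)
qed simp

lemma z4_ext: "s \<in> FC m \<Longrightarrow> s @ z4 \<in> FC (m + 4)"
  by (auto simp: FC_iff nc_append nc_Cons)

lemma FC_app: "s @ k \<in> FC (m + 4) \<Longrightarrow> length s = m \<Longrightarrow> s \<in> FC m \<and> k \<in> FC 4"
  by (auto simp: FC_iff nc_append)

lemma move_split:
  assumes r: "r \<in> FC (m + 4)" and mv: "move_ok (FC (m + 4)) ADJ r r'"
  shows "r' \<in> FC (m + 4) \<and>
    ((drop m r' = drop m r \<and> (take m r' = take m r \<or> ADJ (take m r) (take m r'))) \<or>
     (take m r' = take m r \<and> ADJ (drop m r) (drop m r')))"
proof (cases "r' = r")
  case True then show ?thesis using r by simp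
next
  case False
  then have r': "r' \<in> FC (m + 4)" and a: "ADJ r r'" using mv by (auto simp: move_ok_def)
  have l: "length (take m r) = length (take m r')" "length (drop m r) = length (drop m r')"
    using r r' by (auto simp: FC_iff)
  have "ADJ (take m r @ drop m r) (take m r' @ drop m r')" using a by simp
  then show ?thesis using adj_append[OF l] r' by auto
qed

lemma class4:
  assumes "k \<in> FC 4" "k' \<in> FC 4" "ADJ k k'" "2 \<le> hdist z4 k'"
  shows "hdist z4 k = 1 \<and> hdist z4 k' = 2"
proof -
  obtain a b c d where k: "k = [a,b,c,d]" using assms(1)
    by (auto simp: FC_iff length_Suc_conv numeral_eq_Suc)
  obtain a' b' c' d' where k': "k' = [a',b',c',d']" using assms(2)
    by (auto simp: FC_iff length_Suc_conv numeral_eq_Suc)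
  show ?thesis using assms unfolding k k'
    by (cases a; cases b; cases c; cases d; cases a'; cases b'; cases c'; cases d')
       (simp_all add: FC_iff adj_iff nc_Cons)
qed

lemma hd_le1:
  assumes "length x = length y" "hdist x y \<le> 1"
  shows "x = y \<or> ADJ x y"
  using assms hdist_0[of x y] by (auto simp: adj_iff)

lemma mset_front:
  assumes "i < length C"
  shows "mset (C!i # (take i C @ drop (Suc i) C)) = mset C"
  by (subst (2) id_take_nth_drop[OF assms]) simp

definition TT :: "nat \<Rightarrow> bool list \<Rightarrow> bool list set" where
  "TT m k = {s \<in> FC m. s @ k \<in> FC (m + 4)}"

definition rho :: "nat \<Rightarrow> bool list \<Rightarrow> bool list \<Rightarrow> bool list" where
  "rho m k s = (if s @ k \<in> FC (m + 4) then s else s[m - 1 := False])"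

lemma rho_into:
  assumes k: "k \<in> FC 4" and s: "s \<in> FC m"
  shows "rho m k s \<in> TT m k"
proof (cases "s @ k \<in> FC (m + 4)")
  case True then show ?thesis using s by (simp add: rho_def TT_def)
next
  case False
  have ls: "length s = m" "nc s" "nc k" "length k = 4" using s k by (auto simp: FC_iff)
  then have c: "s \<noteq> [] \<and> last s \<and> hd k" using False by (auto simp: FC_iff nc_append)
  then have m0: "m > 0" using ls by auto
  let ?s = "s[m - 1 := False]"
  have n1: "nc ?s" by (rule nc_mono[of _ s]) (use ls in \<open>auto simp: nth_list_update\<close>)
  have "last ?s = ?s ! (length ?s - 1)" by (rule last_conv_nth) (use m0 ls in auto)
  also have "\<dots> = False" using m0 ls by simp
  finally have "last ?s = False" .
  then have "?s @ k \<in> FC (m + 4)" using n1 ls by (auto simp: FC_iff nc_append)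
  moreover have "?s \<in> FC m" using n1 ls by (simp add: FC_iff)
  ultimately show ?thesis using False by (simp add: rho_def TT_def)
qed

lemma rho_id: "s \<in> TT m k \<Longrightarrow> rho m k s = s"
  by (simp add: rho_def TT_def)

lemma rho_hom_aux:
  assumes k: "k \<in> FC 4" and s: "s \<in> FC m" and s': "s' \<in> FC m"
    and a: "ADJ s s'" and inT: "s @ k \<in> FC (m + 4)" and ninT: "s' @ k \<notin> FC (m + 4)"
  shows "rho m k s = rho m k s' \<or> ADJ (rho m k s) (rho m k s')"
proof -
  have ls: "length s = m" "nc s" "nc k" "length k = 4" "length s' = m" "nc s'" using s s' k by (auto simp: FC_iff)
  then have c: "s' \<noteq> [] \<and> last s' \<and> hd k" using ninT by (auto simp: FC_iff nc_append)
  then have m0: "m > 0" using ls by auto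
  have "s \<noteq> []" using m0 ls by auto
  then have "\<not> last s" using inT c ls by (auto simp: FC_iff nc_append)
  moreover have "last s = s ! (length s - 1)" by (rule last_conv_nth) (use m0 ls in auto)
  ultimately have si: "s!(m-1) = False" using ls by simp
  have "hdist s (s'[m-1:=False]) \<le> hdist s s'"
    by (rule hdist_upd_le) (use ls si in auto)
  then have "hdist s (s'[m-1:=False]) \<le> 1" using a by (simp add: adj_iff)
  then have "s = s'[m-1:=False] \<or> ADJ s (s'[m-1:=False])" using hd_le1 ls by simp
  then show ?thesis using inT ninT by (simp add: rho_def)
qed

lemma rho_hom:
  assumes k: "k \<in> FC 4" and s: "s \<in> FC m" and s': "s' \<in> FC m" and a: "ADJ s s'"
  shows "rho m k s = rho m k s' \<or> ADJ (rho m k s) (rho m k s')"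
proof -
  have ls: "length s = m" "length s' = m" using s s' by (auto simp: FC_iff)
  consider "s @ k \<in> FC (m + 4)" "s' @ k \<in> FC (m + 4)" | "s @ k \<in> FC (m + 4)" "s' @ k \<notin> FC (m + 4)"
    | "s @ k \<notin> FC (m + 4)" "s' @ k \<in> FC (m + 4)" | "s @ k \<notin> FC (m + 4)" "s' @ k \<notin> FC (m + 4)" by blast
  then show ?thesis
  proof cases
    case 1 then show ?thesis using a by (simp add: rho_def)
  next
    case 2 then show ?thesis using rho_hom_aux[OF k s s' a] by blast
  next
    case 3
    have "ADJ s' s" using a by (simp add: adj_iff hdist_sym)
    then have "rho m k s' = rho m k s \<or> ADJ (rho m k s') (rho m k s)" using rho_hom_aux[OF k s' s] 3 by blast
    then show ?thesis by (auto simp: adj_iff hdist_sym)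
  next
    case 4
    have "hdist (s[m-1:=False]) (s'[m-1:=False]) \<le> hdist s s'" by (rule hdist_upd_both) (use ls in simp)
    then have "hdist (s[m-1:=False]) (s'[m-1:=False]) \<le> 1" using a by (simp add: adj_iff)
    then show ?thesis using hd_le1[of "s[m-1:=False]" "s'[m-1:=False]"] ls 4 by (simp add: rho_def)
  qed
qed

lemma TT_sub: "TT m k \<subseteq> FC m" by (auto simp: TT_def)

lemma region_wins:
  assumes k: "k \<in> FC 4" and D0: "set D0 \<subseteq> FC m" "\<forall>u\<in>FC m. cop_wins (FC m) ADJ D0 u"
    and s: "s \<in> TT m k"
  shows "cop_wins (TT m k) ADJ (map (rho m k) D0) s"
proof (rule retract_wins[where V="FC m"])
  show "cop_wins (FC m) ADJ D0 s" using D0 s TT_sub by blast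
  show "\<forall>x\<in>FC m. rho m k x \<in> TT m k" using rho_into[OF k] by blast
  show "\<forall>x\<in>TT m k. rho m k x = x" using rho_id by blast
  show "\<forall>x y. x \<in> FC m \<longrightarrow> y \<in> FC m \<longrightarrow> ADJ x y \<longrightarrow> rho m k x = rho m k y \<or> ADJ (rho m k x) (rho m k y)"
    using rho_hom[OF k] by blast
qed (use D0 s TT_sub in auto)


definition stp :: "nat \<Rightarrow> bool list \<Rightarrow> bool list \<Rightarrow> bool list" where
  "stp n x y = (if x = y then x else SOME x'. x' \<in> FC n \<and> ADJ x x' \<and> hdist x' y < hdist x y)"

lemma stp_props:
  assumes "x \<in> FC n" "y \<in> FC n"
  shows "stp n x y \<in> FC n \<and> (stp n x y = x \<or> ADJ x (stp n x y)) \<and> hdist (stp n x y) y \<le> hdist x y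
     \<and> (x \<noteq> y \<longrightarrow> hdist (stp n x y) y < hdist x y)"
proof (cases "x = y")
  case True then show ?thesis using assms by (simp add: stp_def)
next
  case False
  have "\<exists>x'. x' \<in> FC n \<and> ADJ x x' \<and> hdist x' y < hdist x y" using ham_step assms False by blast
  from someI_ex[OF this] show ?thesis using False by (simp add: stp_def)
qed

definition wsum :: "bool list list \<Rightarrow> bool list list \<Rightarrow> nat" where
  "wsum F T = sum_list (map2 hdist F T)"

lemma walk_list:
  "length F = length T \<Longrightarrow> set F \<subseteq> FC n \<Longrightarrow> set T \<subseteq> FC n \<Longrightarrow>
    set (map2 (stp n) F T) \<subseteq> FC n \<and> length (map2 (stp n) F T) = length F \<and>
    (\<forall>i<length F. (map2 (stp n) F T)!i = F!i \<or> ADJ (F!i) ((map2 (stp n) F T)!i)) \<and>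
    wsum (map2 (stp n) F T) T \<le> wsum F T \<and> (F \<noteq> T \<longrightarrow> wsum (map2 (stp n) F T) T < wsum F T)"
proof (induction F T rule: list_induct2)
  case Nil then show ?case by (simp add: wsum_def)
next
  case (Cons x xs y ys)
  have p: "stp n x y \<in> FC n \<and> (stp n x y = x \<or> ADJ x (stp n x y)) \<and> hdist (stp n x y) y \<le> hdist x y
     \<and> (x \<noteq> y \<longrightarrow> hdist (stp n x y) y < hdist x y)" using stp_props Cons.prems by simp
  have IH: "set (map2 (stp n) xs ys) \<subseteq> FC n \<and> length (map2 (stp n) xs ys) = length xs \<and>
    (\<forall>i<length xs. (map2 (stp n) xs ys)!i = xs!i \<or> ADJ (xs!i) ((map2 (stp n) xs ys)!i)) \<and>
    wsum (map2 (stp n) xs ys) ys \<le> wsum xs ys \<and> (xs \<noteq> ys \<longrightarrow> wsum (map2 (stp n) xs ys) ys < wsum xs ys)"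
    using Cons by simp
  have w: "wsum (a # as) (b # bs) = hdist a b + wsum as bs" for a as b bs by (simp add: wsum_def)
  show ?case
  proof (intro conjI)
    show "set (map2 (stp n) (x # xs) (y # ys)) \<subseteq> FC n" using p IH by simp
    show "length (map2 (stp n) (x # xs) (y # ys)) = length (x # xs)" using Cons.hyps by simp
    show "\<forall>i<length (x # xs). map2 (stp n) (x # xs) (y # ys) ! i = (x # xs) ! i \<or> ADJ ((x # xs) ! i) (map2 (stp n) (x # xs) (y # ys) ! i)"
    proof (intro allI impI)
      fix i assume "i < length (x # xs)"
      then show "map2 (stp n) (x # xs) (y # ys) ! i = (x # xs) ! i \<or> ADJ ((x # xs) ! i) (map2 (stp n) (x # xs) (y # ys) ! i)"
        using p IH Cons.hyps by (cases i) auto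
    qed
    show "wsum (map2 (stp n) (x # xs) (y # ys)) (y # ys) \<le> wsum (x # xs) (y # ys)"
      using p IH Cons.hyps by (simp add: w)
    show "x # xs \<noteq> y # ys \<longrightarrow> wsum (map2 (stp n) (x # xs) (y # ys)) (y # ys) < wsum (x # xs) (y # ys)"
      using p IH Cons.hyps by (auto simp: w)
  qed
qed

abbreviation VV :: "nat \<Rightarrow> bool list set" where "VV m \<equiv> FC (m + 4)"

definition OIH :: "nat \<Rightarrow> nat \<Rightarrow> bool list \<Rightarrow> bool" where
  "OIH m j k \<longleftrightarrow> (\<forall>r' F' g'. r' \<in> VV m \<longrightarrow> set F' \<subseteq> VV m \<longrightarrow> length F' = j \<longrightarrow>
      (g' = take m r' @ z4 \<or> ADJ g' (take m r' @ z4)) \<longrightarrow>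
      2 - hdist z4 (drop m r') < 2 - hdist z4 k \<longrightarrow> cop_wins (VV m) ADJ (g' # F') r')"

lemma class_change:
  assumes oih: "OIH m j k" and k: "k = drop m r" and r: "r \<in> VV m"
    and r': "r' \<in> VV m" and tk: "take m r' = take m r" and a: "ADJ (drop m r) (drop m r')"
    and F: "set F \<subseteq> VV m" "length F = j"
  shows "cop_wins (VV m) ADJ ((take m r @ z4) # F) r'"
proof (cases "hdist (take m r @ z4) r' \<le> 1")
  case True
  have "length (take m r @ z4) = length r'" using r r' by (simp add: FC_iff)
  then have "(take m r @ z4) = r' \<or> ADJ (take m r @ z4) r'" using hd_le1 True by blast
  then show ?thesis using capture_now[of 0 "(take m r @ z4) # F" r' "VV m" ADJ] r' by simp
next
  case False
  have lt: "length (take m r) = m" using r by (simp add: FC_iff)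
  have "r' = take m r @ drop m r'" using tk FC_split(3)[of r' m 4] r' by simp
  then have "hdist (take m r @ z4) r' = hdist z4 (drop m r')"
    using hdist_append[of "take m r" "take m r" z4 "drop m r'"] by simp
  then have "2 \<le> hdist z4 (drop m r')" using False by simp
  then have cw: "hdist z4 (drop m r) = 1 \<and> hdist z4 (drop m r') = 2"
    using class4[OF FC_split(2)[OF r] FC_split(2)[OF r'] a] by simp
  show ?thesis using oih[unfolded OIH_def, rule_format, of r' F "take m r @ z4"] r' F tk cw k by simp
qed


lemma lift_move:
  assumes "move_ok (TT m k) ADJ d d'" "d \<in> TT m k"
  shows "move_ok (VV m) ADJ (d @ k) (d' @ k)"
proof (cases "d' = d")
  case True then show ?thesis by (simp add: move_ok_def)
next
  case False
  then have d': "d' \<in> TT m k" "ADJ d d'" using assms by (auto simp: move_ok_def)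
  have "length d = length d'" using d' assms(2) by (auto simp: TT_def FC_iff)
  then have "ADJ (d @ k) (d' @ k)" using adj_append[of d d' k k] d' by simp
  then show ?thesis using d' by (auto simp: move_ok_def TT_def)
qed

lemma guard_move:
  assumes "g = s @ z4 \<or> ADJ g (s @ z4)" "s \<in> FC m"
  shows "move_ok (VV m) ADJ g (s @ z4)"
  using assms z4_ext by (auto simp: move_ok_def)

lemma z4_adj:
  assumes "s' = s \<or> ADJ s s'" "length s = length s'"
  shows "s @ z4 = s' @ z4 \<or> ADJ (s @ z4) (s' @ z4)"
  using assms adj_append[of s s' z4 z4] by auto

lemma capture_front:
  assumes "hdist g r \<le> 1" "length g = length r" "r \<in> V"
  shows "cop_wins V ADJ (g # F) r"
proof -
  have "g = r \<or> ADJ g r" using hd_le1 assms by blast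
  then show ?thesis using capture_now[of 0 "g # F" r V ADJ] assms by simp
qed

lemma g_len: "(g = s @ z4 \<or> ADJ g (s @ z4)) \<Longrightarrow> length g = length s + 4"
  by (auto simp: adj_iff)

lemma sim:
  assumes oih: "OIH m j k" and k: "k \<in> FC 4"
    and cw: "cop_wins (TT m k) ADJ D s"
  shows "set D \<subseteq> TT m k \<Longrightarrow> length D = j \<Longrightarrow> s \<in> TT m k \<Longrightarrow> (g = s @ z4 \<or> ADJ g (s @ z4)) \<Longrightarrow>
    cop_wins (VV m) ADJ (g # map (\<lambda>d. d @ k) D) (s @ k)"
  using cw
proof (induction arbitrary: g rule: cop_wins.induct)
  case (caught s D)
  then have "s @ k \<in> set (g # map (\<lambda>d. d @ k) D)" by auto
  then show ?case by (rule cop_wins.caught)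
next
  case (step D D' s)
  have sT: "s \<in> FC m" "s @ k \<in> VV m" using step.prems(3) by (auto simp: TT_def)
  have ls: "length s = m" using sT by (simp add: FC_iff)
  have tr: "take m (s @ k) = s" "drop m (s @ k) = k" using ls by auto
  show ?case
  proof (cases "hdist g (s @ k) \<le> 1")
    case True
    have "length g = length (s @ k)" using g_len[OF step.prems(4)] sT by (simp add: FC_iff)
    then show ?thesis using capture_front True sT by blast
  next
    case False
    let ?C' = "(s @ z4) # map (\<lambda>d. d @ k) D'"
    have lD': "length D' = length D" using step(1) by (simp add: cops_move_ok_def)
    have sD': "set D' \<subseteq> TT m k" using cops_move_set step(1) step.prems(1) by blast
    have mv: "cops_move_ok (VV m) ADJ (g # map (\<lambda>d. d @ k) D) ?C'"
      unfolding cops_move_ok_def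
    proof (intro conjI allI impI)
      show "length ?C' = length (g # map (\<lambda>d. d @ k) D)" using lD' by simp
      fix i assume i: "i < length (g # map (\<lambda>d. d @ k) D)"
      show "move_ok (VV m) ADJ ((g # map (\<lambda>d. d @ k) D) ! i) (?C' ! i)"
      proof (cases i)
        case 0 then show ?thesis using guard_move step.prems(4) sT by simp
      next
        case (Suc i')
        then have i': "i' < length D" using i by simp
        then have "move_ok (TT m k) ADJ (D!i') (D'!i')" using step(1) by (simp add: cops_move_ok_def)
        moreover have "D!i' \<in> TT m k" using i' step.prems(1) by auto
        ultimately show ?thesis using lift_move Suc i' lD' by simp
      qed
    qed
    show ?thesis
    proof (rule cop_wins.step[OF mv])
      show "s @ k \<in> set ?C' \<or> (\<forall>r'. move_ok (VV m) ADJ (s @ k) r' \<longrightarrow> cop_wins (VV m) ADJ ?C' r')"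
      proof (cases "s \<in> set D'")
        case True then show ?thesis by auto
      next
        case nin: False
        show ?thesis
        proof (intro disjI2 allI impI)
          fix r' assume mvr: "move_ok (VV m) ADJ (s @ k) r'"
          have ms: "r' \<in> VV m \<and>
            ((drop m r' = k \<and> (take m r' = s \<or> ADJ s (take m r'))) \<or>
             (take m r' = s \<and> ADJ k (drop m r')))"
            using move_split[OF sT(2) mvr] tr by simp
          then have r': "r' \<in> VV m" by blast
          from ms consider (A) "drop m r' = k" "take m r' = s \<or> ADJ s (take m r')"
            | (B) "take m r' = s" "ADJ k (drop m r')" by blast
          then show "cop_wins (VV m) ADJ ?C' r'"
          proof cases
            case A
            let ?s' = "take m r'"
            have s'F: "?s' \<in> FC m" using FC_split(1)[OF r'] .
            have req: "r' = ?s' @ k" using FC_split(3)[OF r'] A by simp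
            have s'T: "?s' \<in> TT m k" using s'F r' req by (auto simp: TT_def)
            have "move_ok (TT m k) ADJ s ?s'" using A s'T by (auto simp: move_ok_def)
            then have IH: "\<forall>g. set D' \<subseteq> TT m k \<longrightarrow> length D' = j \<longrightarrow> ?s' \<in> TT m k \<longrightarrow>
                (g = ?s' @ z4 \<or> ADJ g (?s' @ z4)) \<longrightarrow> cop_wins (VV m) ADJ (g # map (\<lambda>d. d @ k) D') (?s' @ k)"
              using step(2) nin by blast
            have l2: "length s = length ?s'" using ls s'F by (simp add: FC_iff)
            have "s @ z4 = ?s' @ z4 \<or> ADJ (s @ z4) (?s' @ z4)"
              using z4_adj[of ?s' s] A l2 by auto
            then show ?thesis using IH sD' lD' step.prems(2) s'T req by metis
          next
            case B
            have "cop_wins (VV m) ADJ ((take m (s @ k) @ z4) # map (\<lambda>d. d @ k) D') r'"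
            proof (rule class_change[OF oih _ sT(2) r'])
              show "k = drop m (s @ k)" using tr by simp
              show "take m r' = take m (s @ k)" using B tr by simp
              show "ADJ (drop m (s @ k)) (drop m r')" using B tr by simp
              show "set (map (\<lambda>d. d @ k) D') \<subseteq> VV m" using sD' by (auto simp: TT_def)
              show "length (map (\<lambda>d. d @ k) D') = j" using lD' step.prems(2) by simp
            qed
            then show ?thesis unfolding tr(1) .
          qed
        qed
      qed
    qed
  qed
qed


lemma walk:
  assumes D0: "length D0 = j" "set D0 \<subseteq> FC m" "\<forall>u\<in>FC m. cop_wins (FC m) ADJ D0 u"
    and oih: "OIH m j k" and k: "k \<in> FC 4"
  shows "drop m r = k \<Longrightarrow> r \<in> VV m \<Longrightarrow> set F \<subseteq> VV m \<Longrightarrow> length F = j \<Longrightarrow>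
    (g = take m r @ z4 \<or> ADJ g (take m r @ z4)) \<Longrightarrow> cop_wins (VV m) ADJ (g # F) r"
proof (induction "wsum F (map (\<lambda>d. rho m k d @ k) D0)" arbitrary: r F g rule: less_induct)
  case less
  let ?tg = "map (\<lambda>d. rho m k d @ k) D0"
  have tgV: "set ?tg \<subseteq> VV m" using rho_into[OF k] D0(2) by (auto simp: TT_def)
  have ltg: "length ?tg = j" using D0 by simp
  let ?s = "take m r"
  have sF: "?s \<in> FC m" using FC_split(1)[OF less.prems(2)] .
  have req: "r = ?s @ k" using FC_split(3)[OF less.prems(2)] less.prems(1) by simp
  have sT: "?s \<in> TT m k" using sF less.prems(2) req by (auto simp: TT_def)
  show ?case
  proof (cases "F = ?tg")
    case True
    have cw: "cop_wins (TT m k) ADJ (map (rho m k) D0) ?s" using region_wins[OF k D0(2,3) sT] .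
    have "cop_wins (VV m) ADJ (g # map (\<lambda>d. d @ k) (map (rho m k) D0)) (?s @ k)"
    proof (rule sim[OF oih k cw])
      show "set (map (rho m k) D0) \<subseteq> TT m k" using rho_into[OF k] D0(2) by auto
    qed (use D0 sT less.prems(5) in auto)
    then show ?thesis using True req by (simp add: comp_def)
  next
    case Fne: False
    show ?thesis
    proof (cases "hdist g r \<le> 1")
      case True
      have "length g = length r" using g_len[OF less.prems(5)] less.prems(2) sF by (simp add: FC_iff)
      then show ?thesis using capture_front True less.prems(2) by blast
    next
      case False
      let ?F' = "map2 (stp (m + 4)) F ?tg"
      have WL: "set ?F' \<subseteq> VV m \<and> length ?F' = length F \<and>
        (\<forall>i<length F. ?F'!i = F!i \<or> ADJ (F!i) (?F'!i)) \<and>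
        wsum ?F' ?tg \<le> wsum F ?tg \<and> (F \<noteq> ?tg \<longrightarrow> wsum ?F' ?tg < wsum F ?tg)"
        using walk_list[of F ?tg "m + 4"] less.prems(3,4) ltg tgV by simp
      let ?C' = "(?s @ z4) # ?F'"
      have mv: "cops_move_ok (VV m) ADJ (g # F) ?C'"
        unfolding cops_move_ok_def
      proof (intro conjI allI impI)
        show "length ?C' = length (g # F)" using WL by simp
        fix i assume i: "i < length (g # F)"
        show "move_ok (VV m) ADJ ((g # F) ! i) (?C' ! i)"
        proof (cases i)
          case 0 then show ?thesis using guard_move less.prems(5) sF by simp
        next
          case (Suc i')
          then have i': "i' < length F" using i by simp
          then have "?F'!i' \<in> VV m" using WL by (metis nth_mem subsetD)
          then show ?thesis using WL i' Suc by (auto simp: move_ok_def)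
        qed
      qed
      show ?thesis
      proof (rule cop_wins.step[OF mv], intro disjI2 allI impI)
        fix r' assume mvr: "move_ok (VV m) ADJ r r'"
        have ms: "r' \<in> VV m \<and>
            ((drop m r' = drop m r \<and> (take m r' = take m r \<or> ADJ (take m r) (take m r'))) \<or>
             (take m r' = take m r \<and> ADJ (drop m r) (drop m r')))"
          using move_split[OF less.prems(2) mvr] .
        then have r': "r' \<in> VV m" by blast
        from ms consider (A) "drop m r' = drop m r" "take m r' = take m r \<or> ADJ (take m r) (take m r')"
          | (B) "take m r' = take m r" "ADJ (drop m r) (drop m r')" by blast
        then show "cop_wins (VV m) ADJ ?C' r'"
        proof cases
          case A
          have l2: "length (take m r) = length (take m r')" using less.prems(2) r' by (simp add: FC_iff)
          have g': "?s @ z4 = take m r' @ z4 \<or> ADJ (?s @ z4) (take m r' @ z4)"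
            using z4_adj[of "take m r'" "take m r"] A l2 by auto
          have lt: "wsum ?F' ?tg < wsum F ?tg" using WL Fne by blast
          show ?thesis
            using less.hyps[OF lt] A less.prems(1) r' WL less.prems(4) g' by auto
        next
          case B
          show ?thesis
            by (rule class_change[OF oih _ less.prems(2) r' B]) (use less.prems(1) WL less.prems(4) in auto)
        qed
      qed
    qed
  qed
qed

lemma P23:
  assumes D0: "length D0 = j" "set D0 \<subseteq> FC m" "\<forall>u\<in>FC m. cop_wins (FC m) ADJ D0 u"
  shows "r \<in> VV m \<Longrightarrow> set F \<subseteq> VV m \<Longrightarrow> length F = j \<Longrightarrow>
    (g = take m r @ z4 \<or> ADJ g (take m r @ z4)) \<Longrightarrow> cop_wins (VV m) ADJ (g # F) r"
proof (induction "2 - hdist z4 (drop m r)" arbitrary: r F g rule: less_induct)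
  case less
  have oih: "OIH m j (drop m r)" unfolding OIH_def using less.hyps by blast
  show ?case by (rule walk[OF D0 oih FC_split(2)[OF less.prems(1)]]) (use less.prems in auto)
qed

lemma guard_front:
  assumes D0: "length D0 = j" "set D0 \<subseteq> FC m" "\<forall>u\<in>FC m. cop_wins (FC m) ADJ D0 u"
    and i: "i < length C" and lC: "length C = Suc j" and sC: "set C \<subseteq> VV m" and r: "r \<in> VV m"
    and g: "C!i = take m r @ z4 \<or> ADJ (C!i) (take m r @ z4)"
  shows "cop_wins (VV m) ADJ C r"
proof -
  let ?F = "take i C @ drop (Suc i) C"
  have "cop_wins (VV m) ADJ (C!i # ?F) r"
  proof (rule P23[OF D0 r])
    have "set ?F \<subseteq> set C" using set_take_subset set_drop_subset by fastforce
    then show "set ?F \<subseteq> VV m" using sC by blast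
    show "length ?F = j" using i lC by simp
  qed (use g in auto)
  then show ?thesis using cop_wins_perm[of "VV m" ADJ "C!i # ?F" r C] mset_front[OF i] by simp
qed

lemma phase1:
  assumes D0: "length D0 = j" "set D0 \<subseteq> FC m" "\<forall>u\<in>FC m. cop_wins (FC m) ADJ D0 u"
    and cw: "cop_wins (FC m) ADJ D u"
  shows "set D \<subseteq> FC m \<Longrightarrow> length D = j \<Longrightarrow> e \<in> VV m \<Longrightarrow> r \<in> VV m \<Longrightarrow> take m r = u \<Longrightarrow>
    cop_wins (VV m) ADJ (map (\<lambda>d. d @ z4) D @ [e]) r"
  using cw
proof (induction arbitrary: r rule: cop_wins.induct)
  case (caught u D)
  obtain i where i: "i < length D" "D!i = u" using caught.hyps by (metis in_set_conv_nth)
  let ?C = "map (\<lambda>d. d @ z4) D @ [e]"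
  have Ci: "?C!i = u @ z4" using i by (simp add: nth_append)
  have sC: "set ?C \<subseteq> VV m" using caught.prems z4_ext by auto
  show ?case
    by (rule guard_front[OF D0, of i]) (use i Ci sC caught.prems in auto)
next
  case (step D D' u)
  let ?C' = "map (\<lambda>d. d @ z4) D' @ [e]"
  have lD': "length D' = length D" using step(1) by (simp add: cops_move_ok_def)
  have sD': "set D' \<subseteq> FC m" using cops_move_set step(1) step.prems(1) by blast
  have mv: "cops_move_ok (VV m) ADJ (map (\<lambda>d. d @ z4) D @ [e]) ?C'"
    unfolding cops_move_ok_def
  proof (intro conjI allI impI)
    show "length ?C' = length (map (\<lambda>d. d @ z4) D @ [e])" using lD' by simp
    fix i assume i: "i < length (map (\<lambda>d. d @ z4) D @ [e])"
    show "move_ok (VV m) ADJ ((map (\<lambda>d. d @ z4) D @ [e]) ! i) (?C' ! i)"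
    proof (cases "i < length D")
      case True
      then have mo: "move_ok (FC m) ADJ (D!i) (D'!i)" using step(1) by (simp add: cops_move_ok_def)
      have l: "length (D!i) = length (D'!i)" using True lD' step.prems(1) sD' by (simp add: FC_iff subset_iff)
      have "D'!i @ z4 = D!i @ z4 \<or> (D'!i @ z4 \<in> VV m \<and> ADJ (D!i @ z4) (D'!i @ z4))"
        using mo l z4_ext adj_append[OF l, of z4 z4] by (auto simp: move_ok_def)
      then show ?thesis using True lD' by (auto simp: nth_append move_ok_def)
    next
      case False
      then have "i = length D" using i by simp
      then show ?thesis using lD' by (simp add: nth_append move_ok_def)
    qed
  qed
  show ?case
  proof (rule cop_wins.step[OF mv], intro disjI2 allI impI)
    fix r' assume mvr: "move_ok (VV m) ADJ r r'"
    have ms: "r' \<in> VV m \<and>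
            ((drop m r' = drop m r \<and> (take m r' = take m r \<or> ADJ (take m r) (take m r'))) \<or>
             (take m r' = take m r \<and> ADJ (drop m r) (drop m r')))"
      using move_split[OF step.prems(4) mvr] .
    then have r': "r' \<in> VV m" and tk: "take m r' = u \<or> ADJ u (take m r')" using step.prems(5) by auto
    have u'F: "take m r' \<in> FC m" using FC_split(1)[OF r'] .
    have l2: "length u = length (take m r')" using step.prems(4,5) r' by (auto simp: FC_iff)
    show "cop_wins (VV m) ADJ ?C' r'"
    proof (cases "u \<in> set D'")
      case True
      obtain i where i: "i < length D'" "D'!i = u" using True by (metis in_set_conv_nth)
      have Ci: "?C'!i = u @ z4" using i by (simp add: nth_append)
      have sC: "set ?C' \<subseteq> VV m" using sD' step.prems(3) z4_ext by auto
      have g: "u @ z4 = take m r' @ z4 \<or> ADJ (u @ z4) (take m r' @ z4)"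
        using z4_adj[of "take m r'" u] tk l2 by auto
      show ?thesis
        by (rule guard_front[OF D0, of i]) (use i Ci sC r' g lD' step.prems(2) in auto)
    next
      case False
      have "move_ok (FC m) ADJ u (take m r')" using tk u'F by (auto simp: move_ok_def)
      then have "cop_wins (FC m) ADJ D' (take m r') \<and> (\<forall>r. set D' \<subseteq> FC m \<longrightarrow> length D' = j \<longrightarrow> e \<in> VV m \<longrightarrow> r \<in> VV m \<longrightarrow> take m r = take m r' \<longrightarrow>
          cop_wins (VV m) ADJ ?C' r)"
        using step(2) False by blast
      then show ?thesis using sD' lD' step.prems r' by auto
    qed
  qed
qed

lemma recur:
  assumes "k_cop_win (FC m) ADJ j"
  shows "k_cop_win (FC (m + 4)) ADJ (Suc j)"
proof -
  obtain D0 where D0: "length D0 = j" "set D0 \<subseteq> FC m" "\<forall>u\<in>FC m. cop_wins (FC m) ADJ D0 u"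
    using assms by (auto simp: k_cop_win_def)
  let ?e = "replicate (m + 4) False"
  have e: "?e \<in> VV m" by (auto simp: FC_iff nc_def)
  let ?C = "map (\<lambda>d. d @ z4) D0 @ [?e]"
  show ?thesis unfolding k_cop_win_def
  proof (intro exI[of _ ?C] conjI ballI)
    show "length ?C = Suc j" using D0 by simp
    show "set ?C \<subseteq> FC (m + 4)" using D0 e z4_ext by auto
    fix r assume r: "r \<in> FC (m + 4)"
    have "take m r \<in> FC m" using FC_split(1) r by blast
    then show "cop_wins (FC (m + 4)) ADJ ?C r"
      using phase1[OF D0 _ D0(2,1) e r] D0(3) by blast
  qed
qed


lemma base_dom:
  assumes "set C \<subseteq> V" "\<forall>r\<in>V. \<exists>i<length C. C!i = r \<or> ADJ (C!i) r"
  shows "k_cop_win V ADJ (length C)"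
  unfolding k_cop_win_def
proof (intro exI[of _ C] conjI ballI)
  fix r assume "r \<in> V"
  then show "cop_wins V ADJ C r" using assms(2) dominate_wins[of r V C ADJ] by blast
qed (use assms in auto)

lemma base0: "k_cop_win (FC 0) ADJ 1"
proof -
  have "k_cop_win (FC 0) ADJ (length [[]::bool list])"
    by (rule base_dom) (auto simp: FC_iff)
  then show ?thesis by simp
qed

lemma base1: "k_cop_win (FC 1) ADJ 1"
proof -
  have "k_cop_win (FC 1) ADJ (length [[False]])"
  proof (rule base_dom)
    show "set [[False]] \<subseteq> FC 1" by (auto simp: FC_iff nc_Cons)
    show "\<forall>r\<in>FC 1. \<exists>i<length [[False]]. [[False]] ! i = r \<or> ADJ ([[False]] ! i) r"
    proof
      fix r assume "r \<in> FC 1"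
      then obtain a where "r = [a]" by (auto simp: FC_iff length_Suc_conv)
      then show "\<exists>i<length [[False]]. [[False]] ! i = r \<or> ADJ ([[False]] ! i) r"
        by (cases a) (auto simp: adj_iff)
    qed
  qed
  then show ?thesis by simp
qed

lemma base2: "k_cop_win (FC 2) ADJ 1"
proof -
  have "k_cop_win (FC 2) ADJ (length [[False,False]])"
  proof (rule base_dom)
    show "set [[False,False]] \<subseteq> FC 2" by (auto simp: FC_iff nc_Cons)
    show "\<forall>r\<in>FC 2. \<exists>i<length [[False,False]]. [[False,False]] ! i = r \<or> ADJ ([[False,False]] ! i) r"
    proof
      fix r assume r: "r \<in> FC 2"
      then obtain a b where ab: "r = [a,b]" by (auto simp: FC_iff length_Suc_conv numeral_eq_Suc)
      then have "nc [a,b]" using r by (simp add: FC_iff)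
      then show "\<exists>i<length [[False,False]]. [[False,False]] ! i = r \<or> ADJ ([[False,False]] ! i) r"
        unfolding ab by (cases a; cases b) (auto simp: adj_iff nc_Cons)
    qed
  qed
  then show ?thesis by simp
qed

lemma base3: "k_cop_win (FC 3) ADJ 2"
proof -
  let ?C = "[[False,False,False],[True,False,True]]"
  have "k_cop_win (FC 3) ADJ (length ?C)"
  proof (rule base_dom)
    show "set ?C \<subseteq> FC 3" by (auto simp: FC_iff nc_Cons)
    show "\<forall>r\<in>FC 3. \<exists>i<length ?C. ?C ! i = r \<or> ADJ (?C ! i) r"
    proof
      fix r assume r: "r \<in> FC 3"
      then obtain a b c where ab: "r = [a,b,c]" by (auto simp: FC_iff length_Suc_conv numeral_eq_Suc)
      then have "nc [a,b,c]" using r by (simp add: FC_iff)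
      then have "(?C!0 = r \<or> ADJ (?C!0) r) \<or> (?C!1 = r \<or> ADJ (?C!1) r)"
        unfolding ab by (cases a; cases b; cases c) (auto simp: adj_iff nc_Cons)
      then show "\<exists>i<length ?C. ?C ! i = r \<or> ADJ (?C ! i) r" by (metis One_nat_def length_Cons list.size(3) less_2_cases_iff numeral_2_eq_2 lessI zero_less_Suc)
    qed
  qed
  then show ?thesis by (simp add: numeral_2_eq_2)
qed

fun jn :: "nat \<Rightarrow> nat" where
  "jn n = (if n < 3 then 1 else if n = 3 then 2 else Suc (jn (n - 4)))"

declare jn.simps[simp del]

lemma K_jn: "k_cop_win (FC n) ADJ (jn n)"
proof (induction n rule: less_induct)
  case (less n)
  show ?case
  proof (cases "n < 3")
    case True
    then consider "n = 0" | "n = 1" | "n = 2" by linarith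
    then show ?thesis using base0 base1 base2 by cases (simp_all add: jn.simps)
  next
    case False
    show ?thesis
    proof (cases "n = 3")
      case True then show ?thesis using base3 by (simp add: jn.simps numeral_2_eq_2)
    next
      case False
      then have n: "n = (n - 4) + 4" "n - 4 < n" using \<open>\<not> n < 3\<close> by auto
      have "k_cop_win (FC ((n - 4) + 4)) ADJ (Suc (jn (n - 4)))" using recur less.IH[OF n(2)] by blast
      then show ?thesis using n \<open>\<not> n < 3\<close> False by (simp add: jn.simps[of n])
    qed
  qed
qed

lemma jn_formula: "jn n = n div 4 + (if n mod 4 = 3 then 2 else 1)"
proof (induction n rule: less_induct)
  case (less n)
  show ?case
  proof (cases "n < 4")
    case True
    then consider "n = 0" | "n = 1" | "n = 2" | "n = 3" by linarith
    then show ?thesis by cases (simp_all add: jn.simps)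
  next
    case False
    then obtain k where k: "n = k + 4" by (metis add.commute le_Suc_ex not_less)
    have "jn n = Suc (jn k)" unfolding k by (subst jn.simps) simp
    moreover have "jn k = k div 4 + (if k mod 4 = 3 then 2 else 1)" using less.IH k by simp
    ultimately show ?thesis using k by simp
  qed
qed

lemma jn_bound: "6 \<le> n \<Longrightarrow> 3 * jn n \<le> n + 2"
  unfolding jn_formula by presburger

theorem theorem4p2:
  fixes n :: nat
  assumes "n \<ge> 6"
  shows "int (cop_number (fib_cube_vertices n) hypercube_adj) \<le> ceiling (real n / 3)"
proof -
  have "cop_number (fib_cube_vertices n) hypercube_adj \<le> jn n"
    unfolding cop_number_def using K_jn by (rule Least_le)
  moreover have "int (jn n) \<le> ceiling (real n / 3)"
  proof -
    have "3 * jn n \<le> n + 2" using jn_bound assms by blast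
    then have "real (jn n) - 1 < real n / 3" by linarith
    then show ?thesis by (simp add: le_ceiling_iff)
  qed
  ultimately show ?thesis by linarith
qed

end
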